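(* Let $d,K,L,M,N\in\mathbb N$ and let $w_{k,l,m},x_{k,l,n}\in\mathbb R^d$ for $k\in[K],l\in[L],m\in[M],n\in[N]$. Suppose that for all $k\in[K]$, $$\sum_{j=1}^k\Big(\sum_{(l,m,n)\in[L]\times[M]\times[N]}|w_{k,l,m}^Tx_{j,l,n}|\Big)^2\le\beta,\qquad\sum_{l=1}^L\sum_{m=1}^M\|w_{k,l,m}\|_1\le G_w,\qquad\sum_{l=1}^L\sum_{n=1}^N\|x_{k,l,n}\|_1\le G_x,$$ with $G_w,G_x>0$. Then for any $\lambda>0$, $$\sum_{k=1}^K\sum_{(l,m,n)\in[L]\times[M]\times[N]}|w_{k,l,m}^Tx_{k,l,n}|\le\sqrt{(\lambda+\beta)\,dLMK\log\Big(1+\frac{MG_w^2G_x^2K}{dL\lambda}\Big)}.$$ *)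

theory Defs
  imports "HOL-Analysis.Analysis"
begin

definition l1norm :: "real ^ 'd \<Rightarrow> real" where
  "l1norm x = (\<Sum>i\<in>UNIV. \<bar>x $ i\<bar>)"

end

theory Submission
  imports Defs
begin


lemma row_eq: "row i A = A $ i"
  by (simp add: row_def vec_eq_iff)

lemma det_rows_op:
  fixes A :: "real^'n^'n"
  assumes "p \<notin> S"
  shows "det (\<chi> i. if i \<in> S then row i A + c i *s row p A else row i A) = det A"
proof -
  have "finite S" by simp
  then show ?thesis using assms
  proof (induction S rule: finite_induct)
    case empty
    then show ?case by (simp add: row_eq)
  next
    case (insert q S)
    let ?M = "(\<chi> i. if i \<in> S then row i A + c i *s row p A else row i A) :: real^'n^'n"
    have qp: "q \<noteq> p" using insert by auto
    have eq: "(\<chi> i. if i \<in> insert q S then row i A + c i *s row p A else row i A)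
       = (\<chi> k. if k = q then row q ?M + c q *s row p ?M else row k ?M)"
      using insert qp by (auto simp: row_eq vec_eq_iff)
    show ?case unfolding eq det_row_operation[OF qp] using insert by simp
  qed
qed



definition outer :: "real^'n \<Rightarrow> real^'n^'n" where
  "outer a = (\<chi> i j. a$i * a$j)"

lemma det_rank1_gen:
  fixes A :: "real^'n^'n"
  assumes y: "transpose A *v y = u"
  shows "det (\<chi> i. if i \<in> S then row i A + u$i *s u else row i A)
         = det A + (\<Sum>p\<in>S. u$p * y$p) * det A"
proof -
  have usum: "u = (\<Sum>i\<in>UNIV. y$i *s row i A)"
    using y by (simp add: vec_eq_iff matrix_vector_mult_def transpose_def row_def sum_component mult.commute)
  have R: "det (\<chi> i. if i = p then u else row i A) = y$p * det A" for p
    using cramer_lemma_transpose[of p y A] by (simp only: usum[symmetric])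
  have "finite S" by simp
  then show ?thesis
  proof (induction S rule: finite_induct)
    case empty
    then show ?case by (simp add: row_eq)
  next
    case (insert q S)
    define c where "c i = (if i \<in> S then row i A + u$i *s u else row i A)" for i
    have e1: "(\<chi> i. if i \<in> insert q S then row i A + u$i *s u else row i A)
          = (\<chi> i. if i = q then row q A + u$q *s u else c i)"
      by (auto simp: c_def vec_eq_iff)
    have e2: "(\<chi> i. if i = q then row q A else c i) = (\<chi> i. if i \<in> S then row i A + u$i *s u else row i A)"
      using insert by (auto simp: c_def vec_eq_iff)
    let ?Rq = "(\<chi> i. if i = q then u else row i A) :: real^'n^'n"
    have e3: "(\<chi> i. if i = q then u else c i) =
       (\<chi> i. if i \<in> S then row i ?Rq + u$i *s row q ?Rq else row i ?Rq)"
      using insert by (auto simp: c_def vec_eq_iff row_eq)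
    have "det (\<chi> i. if i = q then u else c i) = y$q * det A"
      unfolding e3 using det_rows_op[of q S ?Rq "\<lambda>i. u$i"] insert R by simp
    then show ?case unfolding e1 det_row_add det_row_mul e2 insert.IH
      using insert by (simp add: algebra_simps)
  qed
qed

lemma det_rank1:
  fixes A :: "real^'n^'n"
  assumes y: "transpose A *v y = u"
  shows "det (A + outer u) = det A * (1 + u \<bullet> y)"
proof -
  have "A + outer u = (\<chi> i. if i \<in> UNIV then row i A + u$i *s u else row i A)"
    by (simp add: vec_eq_iff outer_def row_def)
  then show ?thesis using det_rank1_gen[OF y, of UNIV]
    by (simp add: inner_vec_def algebra_simps)
qed



definition pdm :: "real^'n^'n \<Rightarrow> bool" where
  "pdm A \<longleftrightarrow> (\<forall>x. x \<noteq> 0 \<longrightarrow> 0 < x \<bullet> (A *v x))"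

lemma pdm_diag: "pdm A \<Longrightarrow> 0 < A$i$i"
proof -
  assume "pdm A"
  then have "0 < axis i 1 \<bullet> (A *v axis i (1::real))"
    unfolding pdm_def by (simp add: axis_eq_0_iff)
  then show ?thesis
    by (simp add: matrix_vector_mult_def inner_vec_def axis_def if_distrib[where f="\<lambda>x. x * _"] if_distrib[where f="\<lambda>x. _ * x"] cong: if_cong)
qed

lemma pdm_nonneg: "pdm A \<Longrightarrow> 0 \<le> x \<bullet> (A *v x)"
  unfolding pdm_def by (cases "x = 0") (auto intro: less_imp_le)

lemma quad_congr:
  fixes x :: "real^'n" and E A :: "real^'n^'n"
  shows "x \<bullet> ((E ** A ** transpose E) *v x) = (transpose E *v x) \<bullet> (A *v (transpose E *v x))"
proof -
  have "x \<bullet> (E *v v) = (transpose E *v x) \<bullet> v" for v :: "real^'n"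
    by (metis dot_lmul_matrix transpose_matrix_vector)
  then show ?thesis by (simp add: matrix_vector_mul_assoc[symmetric])
qed

lemma hadamard_gen:
  fixes J :: "'n::finite set"
  assumes "finite J"
  shows "\<forall>A :: real^'n^'n. transpose A = A \<and> pdm A \<and>
           (\<forall>i j. i \<noteq> j \<and> (i \<notin> J \<or> j \<notin> J) \<longrightarrow> A$i$j = 0) \<longrightarrow> det A \<le> (\<Prod>i\<in>UNIV. A$i$i)"
  using assms
proof (induction J rule: finite_induct)
  case empty
  show ?case
  proof (intro allI impI)
    fix A :: "real^'n^'n"
    assume "transpose A = A \<and> pdm A \<and> (\<forall>i j. i \<noteq> j \<and> (i \<notin> {} \<or> j \<notin> {}) \<longrightarrow> A$i$j = 0)"
    then have "\<And>i j. i \<noteq> j \<Longrightarrow> A$i$j = 0" by auto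
    then show "det A \<le> (\<Prod>i\<in>UNIV. A$i$i)" using det_diagonal[of A] by simp
  qed
next
  case (insert p J)
  show ?case
  proof (intro allI impI, elim conjE)
    fix A :: "real^'n^'n"
    assume sym: "transpose A = A" and pd: "pdm A"
      and z: "\<forall>i j. i \<noteq> j \<and> (i \<notin> insert p J \<or> j \<notin> insert p J) \<longrightarrow> A$i$j = 0"
    have symA: "A$i$j = A$j$i" for i j
    proof -
      have "(transpose A)$j$i = A$j$i" using sym by simp
      then show ?thesis by (simp add: transpose_def)
    qed
    define a where "a = A$p$p"
    have a: "a > 0" using pdm_diag[OF pd] a_def by simp
    have aa: "A$p$p = a" using a_def by simp
    define e where "e i = - A$i$p / a" for i
    define E :: "real^'n^'n" where "E = (\<chi> i k. if k = i then 1 else if k = p then e i else 0)"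
    have Esum: "(\<Sum>k\<in>UNIV. E$i$k * f k) = f i + (if i \<noteq> p then e i * f p else 0)" for i f
    proof -
      have "E$i$k = (if k = i then 1 else 0) + (if k = p \<and> i \<noteq> p then e i else 0)" for k
        by (auto simp: E_def)
      then have "(\<Sum>k\<in>UNIV. E$i$k * f k) = (\<Sum>k\<in>UNIV. (if k = i then f k else 0) + (if k = p \<and> i \<noteq> p then e i * f k else 0))"
        by (intro sum.cong) (auto simp: algebra_simps)
      also have "\<dots> = f i + (if i \<noteq> p then e i * f p else 0)"
        by (simp add: sum.distrib)
      finally show ?thesis .
    qed
    define C where "C = E ** A ** transpose E"
    have EA: "(E ** A)$i$j = A$i$j + (if i \<noteq> p then e i * A$p$j else 0)" for i j
      by (simp add: matrix_matrix_mult_def Esum)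
    have Cij: "C$i$j = (E ** A)$i$j + (if j \<noteq> p then e j * (E ** A)$i$p else 0)" for i j
    proof -
      have "C$i$j = (\<Sum>k\<in>UNIV. E$j$k * (E ** A)$i$k)"
        by (simp add: C_def matrix_matrix_mult_def transpose_def mult.commute)
      then show ?thesis by (simp add: Esum)
    qed
    have Cpp: "C$p$p = a" using Cij EA aa by simp
    have Cp1: "C$i$p = 0" if "i \<noteq> p" for i
      using that a by (simp add: Cij EA e_def aa)
    have Cp2: "C$p$j = 0" if "j \<noteq> p" for j
      using that a by (simp add: Cij EA e_def aa symA[of p j])
    have Cgen: "C$i$j = A$i$j - A$i$p * A$p$j / a" if "i \<noteq> p" "j \<noteq> p" for i j
      using that a by (simp add: Cij EA e_def aa)
    have detE: "det E = 1"
    proof -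
      have "E = (\<chi> i. if i \<in> - {p} then row i (mat 1) + e i *s row p (mat 1) else row i (mat 1))"
        by (auto simp: E_def vec_eq_iff row_def mat_def)
      then show ?thesis using det_rows_op[of p "-{p}" "mat 1 :: real^'n^'n" e] by simp
    qed
    have detC: "det C = det A"
      by (simp add: C_def det_mul detE)
    have symC: "transpose C = C"
      by (simp add: C_def matrix_transpose_mul sym matrix_mul_assoc)
    have pdC: "pdm C"
      unfolding pdm_def
    proof (intro allI impI)
      fix x :: "real^'n" assume x: "x \<noteq> 0"
      have Ex: "(transpose E *v x)$j = x$j + (if j = p then (\<Sum>i\<in>UNIV. (if i \<noteq> p then e i * x$i else 0)) else 0)" for j
      proof -
        have "(transpose E *v x)$j = (\<Sum>i\<in>UNIV. E$i$j * x$i)"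
          by (simp add: matrix_vector_mult_def transpose_def)
        also have "\<dots> = (\<Sum>i\<in>UNIV. (if i = j then x$i else 0) + (if j = p \<and> i \<noteq> p then e i * x$i else 0))"
          by (intro sum.cong) (auto simp: E_def)
        also have "\<dots> = x$j + (if j = p then (\<Sum>i\<in>UNIV. (if i \<noteq> p then e i * x$i else 0)) else 0)"
          by (simp add: sum.distrib)
        finally show ?thesis .
      qed
      have "transpose E *v x \<noteq> 0"
      proof
        assume h: "transpose E *v x = 0"
        have "x$j = 0" if "j \<noteq> p" for j using Ex[of j] h that by simp
        then have "(\<Sum>i\<in>UNIV. (if i \<noteq> p then e i * x$i else 0)) = 0" by (intro sum.neutral) auto
        then have "x$p = 0" using Ex[of p] h by simp
        with \<open>\<And>j. j \<noteq> p \<Longrightarrow> x$j = 0\<close> have "x = 0" by (metis vec_eq_iff zero_index)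
        with x show False by simp
      qed
      then show "0 < x \<bullet> (C *v x)" using pd unfolding pdm_def C_def quad_congr by blast
    qed
    have zC: "\<forall>i j. i \<noteq> j \<and> (i \<notin> J \<or> j \<notin> J) \<longrightarrow> C$i$j = 0"
    proof (intro allI impI)
      fix i j assume h: "i \<noteq> j \<and> (i \<notin> J \<or> j \<notin> J)"
      show "C$i$j = 0"
      proof (cases "i = p \<or> j = p")
        case True then show ?thesis using h Cp1 Cp2 by auto
      next
        case False
        then have "i \<notin> insert p J \<or> j \<notin> insert p J" using h by auto
        then have "A$i$j = 0" "A$i$p = 0 \<or> A$p$j = 0" using z h False by auto
        then show ?thesis using Cgen False by auto
      qed
    qed
    have "det A = det C" using detC by simp
    also have "\<dots> \<le> (\<Prod>i\<in>UNIV. C$i$i)" using insert.IH symC pdC zC by blast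
    also have "\<dots> \<le> (\<Prod>i\<in>UNIV. A$i$i)"
    proof (rule prod_mono, intro conjI)
      fix i :: 'n
      show "0 \<le> C$i$i" using pdm_diag[OF pdC] less_imp_le by blast
      show "C$i$i \<le> A$i$i"
      proof (cases "i = p")
        case True then show ?thesis using Cpp a_def by simp
      next
        case False
        then have "C$i$i = A$i$i - A$i$p * A$i$p / a" using Cgen symA[of p i] by simp
        moreover have "0 \<le> A$i$p * A$i$p / a" using a by simp
        ultimately show ?thesis by linarith
      qed
    qed
    finally show "det A \<le> (\<Prod>i\<in>UNIV. A$i$i)" .
  qed
qed

lemma hadamard:
  fixes A :: "real^'n^'n"
  assumes "transpose A = A" "pdm A"
  shows "det A \<le> (\<Prod>i\<in>UNIV. A$i$i)"
  using hadamard_gen[of "UNIV :: 'n set"] assms by simp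



definition Vm :: "real \<Rightarrow> (nat \<Rightarrow> real^'n) \<Rightarrow> nat \<Rightarrow> real^'n^'n" where
  "Vm c u t = mat c + (\<Sum>s<t. outer (u s))"

lemma Vm_Suc: "Vm c u (Suc t) = Vm c u t + outer (u t)"
  by (simp add: Vm_def add.assoc)

lemma outer_mult: "outer a *v x = (a \<bullet> x) *\<^sub>R a"
  by (simp add: vec_eq_iff outer_def matrix_vector_mult_def inner_vec_def sum_distrib_left mult_ac)

lemma mat_mult: "mat c *v x = c *\<^sub>R (x :: real^'n)"
  by (simp add: vec_eq_iff matrix_vector_mult_def mat_def if_distrib[where f="\<lambda>x. x * _"] cong: if_cong)

lemma Vm_quad: "x \<bullet> (Vm c u t *v x) = c * (x \<bullet> x) + (\<Sum>s<t. (u s \<bullet> x)^2)"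
  by (induction t) (simp_all add: Vm_def mat_mult, simp add: Vm_Suc[unfolded Vm_def] matrix_vector_mult_add_rdistrib
      inner_add_right outer_mult power2_eq_square inner_commute)

lemma transpose_add: "transpose (A + B) = transpose A + transpose (B :: real^'n^'n)"
  by (simp add: transpose_def vec_eq_iff)

lemma transpose_outer: "transpose (outer a) = outer a"
  by (simp add: transpose_def vec_eq_iff outer_def mult.commute)

lemma Vm_sym: "transpose (Vm c u t) = Vm c u t"
proof (induction t)
  case 0 then show ?case by (simp add: Vm_def)
next
  case (Suc t) then show ?case by (simp add: Vm_Suc transpose_add transpose_outer)
qed

lemma Vm_pdm: "c > 0 \<Longrightarrow> pdm (Vm c u t)"
  unfolding pdm_def Vm_quad
proof (intro allI impI)
  fix x :: "real^'a" assume "0 < c" "x \<noteq> 0"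
  then have "0 < c * (x \<bullet> x)" by simp
  moreover have "0 \<le> (\<Sum>s<t. (u s \<bullet> x)^2)" by (simp add: sum_nonneg)
  ultimately show "0 < c * (x \<bullet> x) + (\<Sum>s<t. (u s \<bullet> x)^2)" by linarith
qed

lemma pdm_inj: "pdm A \<Longrightarrow> A *v x = 0 \<Longrightarrow> x = 0"
  unfolding pdm_def by (metis inner_zero_right less_irrefl)

lemma pdm_solve: "pdm A \<Longrightarrow> \<exists>!y. A *v y = z"
proof -
  assume pd: "pdm A"
  obtain B where B: "B ** A = mat 1"
    using matrix_left_invertible_ker[of A] pdm_inj[OF pd] by blast
  then have AB: "A ** B = mat 1" using matrix_left_right_inverse by blast
  have "A *v (B *v z) = z" by (simp add: matrix_vector_mul_assoc AB)
  moreover have "y1 = y2" if "A *v y1 = z" "A *v y2 = z" for y1 y2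
  proof -
    have "A *v (y1 - y2) = 0" using that by (simp add: matrix_vector_mult_diff_distrib)
    then show ?thesis using pdm_inj[OF pd, of "y1 - y2"] by simp
  qed
  ultimately show ?thesis by blast
qed

definition qf :: "real^'n^'n \<Rightarrow> real^'n \<Rightarrow> real" where
  "qf A z = z \<bullet> (THE y. A *v y = z)"

lemma qf_eq:
  assumes "pdm A" "A *v y = z" shows "qf A z = z \<bullet> y"
proof -
  have "(THE y. A *v y = z) = y" using the1_equality[OF pdm_solve[OF assms(1)]] assms(2) by blast
  then show ?thesis by (simp add: qf_def)
qed

lemma sym_bil:
  fixes A :: "real^'n^'n"
  assumes "transpose A = A" shows "a \<bullet> (A *v b) = b \<bullet> (A *v a)"
proof -
  have "a \<bullet> (A *v b) = (a v* A) \<bullet> b" by (simp add: dot_lmul_matrix)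
  also have "a v* A = transpose A *v a" by simp
  also have "\<dots> = A *v a" using assms by simp
  finally show ?thesis by (simp add: inner_commute)
qed

lemma CS_V:
  fixes A :: "real^'n^'n"
  assumes sym: "transpose A = A" and pd: "pdm A"
  shows "(w \<bullet> z)^2 \<le> (w \<bullet> (A *v w)) * qf A z"
proof -
  obtain y where y: "A *v y = z" using pdm_solve[OF pd] by blast
  have qfz: "qf A z = y \<bullet> (A *v y)" using qf_eq[OF pd y] y by (simp add: inner_commute)
  define p where "p = w \<bullet> (A *v w)"
  define q where "q = y \<bullet> (A *v y)"
  define r where "r = w \<bullet> (A *v y)"
  have wz: "w \<bullet> z = r" using y r_def by simp
  have p0: "0 \<le> p" using pdm_nonneg[OF pd] p_def by simp
  have q0: "0 \<le> q" using pdm_nonneg[OF pd] q_def by simp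
  have expand: "(w - t *\<^sub>R y) \<bullet> (A *v (w - t *\<^sub>R y)) = p - 2 * t * r + t^2 * q" for t
  proof -
    have "y \<bullet> (A *v w) = r" using sym_bil[OF sym, of y w] r_def by simp
    then show ?thesis
      by (simp add: p_def q_def r_def matrix_vector_mult_diff_distrib matrix_vector_mult_scaleR
          inner_diff_left inner_diff_right power2_eq_square algebra_simps)
  qed
  show ?thesis
  proof (cases "q = 0")
    case True
    have "y = 0"
    proof (rule ccontr)
      assume "y \<noteq> 0"
      then have "0 < q" using pd unfolding pdm_def q_def by blast
      with True show False by simp
    qed
    then have "r = 0" by (simp add: r_def)
    then show ?thesis using wz p0 qfz q_def True by simp
  next
    case False
    then have qp: "q > 0" using q0 by simp
    have "0 \<le> p - 2 * (r/q) * r + (r/q)^2 * q"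
      using pdm_nonneg[OF pd, of "w - (r/q) *\<^sub>R y"] expand by simp
    also have "\<dots> = p - r^2 / q" using qp by (simp add: power2_eq_square field_simps)
    finally have "r^2 / q \<le> p" by simp
    then have "r^2 \<le> p * q" using qp by (simp add: divide_le_eq)
    then show ?thesis using wz qfz q_def p_def by simp
  qed
qed

lemma rank1:
  fixes V :: "real^'n^'n"
  assumes pd: "pdm V" and sym: "transpose V = V" and y: "V *v y = u"
  shows "det (V + outer u) = det V * (1 + u \<bullet> y)"
    and "qf (V + outer u) u = (u \<bullet> y) / (1 + u \<bullet> y)"
    and "0 \<le> u \<bullet> y"
proof -
  show "det (V + outer u) = det V * (1 + u \<bullet> y)"
    using det_rank1[of V y u] sym y by simp
  have r0: "0 \<le> u \<bullet> y" using pdm_nonneg[OF pd, of y] y by (simp add: inner_commute)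
  then show "0 \<le> u \<bullet> y" .
  have pd2: "pdm (V + outer u)"
    unfolding pdm_def
  proof (intro allI impI)
    fix x :: "real^'n" assume "x \<noteq> 0"
    then have "0 < x \<bullet> (V *v x)" using pd unfolding pdm_def by blast
    moreover have "x \<bullet> (outer u *v x) = (u \<bullet> x)^2"
      by (simp add: outer_mult power2_eq_square inner_commute)
    ultimately show "0 < x \<bullet> ((V + outer u) *v x)"
      by (simp add: matrix_vector_mult_add_rdistrib inner_add_right add_pos_nonneg)
  qed
  have "(V + outer u) *v ((1 / (1 + u \<bullet> y)) *\<^sub>R y) = u"
  proof -
    have "(V + outer u) *v y = (1 + u \<bullet> y) *\<^sub>R u"
      by (simp add: matrix_vector_mult_add_rdistrib outer_mult y algebra_simps)
    then show ?thesis using r0 by (simp add: matrix_vector_mult_scaleR)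
  qed
  from qf_eq[OF pd2 this] show "qf (V + outer u) u = (u \<bullet> y) / (1 + u \<bullet> y)"
    by simp
qed

lemma ln_sum_le:
  assumes fin: "finite A" and ne: "A \<noteq> {}" and pos: "\<forall>i\<in>A. 0 < y i"
  shows "(\<Sum>i\<in>A. ln (y i)) \<le> real (card A) * ln ((\<Sum>i\<in>A. y i) / real (card A))"
proof -
  have cA: "real (card A) > 0" using fin ne by (simp add: card_gt_0_iff)
  define m where "m = (\<Sum>i\<in>A. y i) / real (card A)"
  have sp: "(\<Sum>i\<in>A. y i) > 0" using fin ne pos by (simp add: sum_pos)
  then have m0: "m > 0" using cA m_def by simp
  have each: "ln (y i) \<le> ln m + y i / m - 1" if "i \<in> A" for i
  proof -
    have yi: "y i > 0" using pos that by simp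
    have "ln (y i / m) \<le> y i / m - 1" using ln_le_minus_one[of "y i / m"] yi m0 by simp
    then show ?thesis using ln_div[of "y i" m] yi m0 by simp
  qed
  have "(\<Sum>i\<in>A. ln (y i)) \<le> (\<Sum>i\<in>A. ln m + y i / m - 1)"
    by (rule sum_mono) (use each in auto)
  also have "\<dots> = real (card A) * ln m + (\<Sum>i\<in>A. y i) / m - real (card A)"
    by (simp add: sum.distrib sum_subtractf sum_divide_distrib)
  also have "(\<Sum>i\<in>A. y i) / m = real (card A)" using m_def cA sp by simp
  finally show ?thesis by (simp add: m_def)
qed

lemma frac_le_ln: "0 \<le> r \<Longrightarrow> r / (1 + r) \<le> ln (1 + (r::real))"
proof -
  assume r: "0 \<le> r"
  have "ln (1 / (1 + r)) \<le> 1 / (1 + r) - 1" using r by (intro ln_le_minus_one) simp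
  moreover have "ln (1 / (1 + r)) = - ln (1 + r)" using r by (simp add: ln_div)
  moreover have "1 / (1 + r) - 1 = - (r / (1 + r))" using r by (simp add: field_simps)
  ultimately show ?thesis by linarith
qed



lemma Vm_diag: "(Vm c u T)$i$i = c + (\<Sum>s<T. (u s $ i)^2)"
  by (simp add: Vm_def mat_def sum_component outer_def power2_eq_square)

lemma det_Vm0: "det (Vm c u 0 :: real^'n::finite^'n) = c ^ CARD('n)"
proof -
  have "det (Vm c u 0 :: real^'n^'n) = (\<Prod>i\<in>(UNIV::'n set). (Vm c u 0)$i$i)"
    by (rule det_diagonal) (simp add: Vm_def mat_def)
  then show ?thesis by (simp add: Vm_def mat_def)
qed

lemma potential:
  fixes u :: "nat \<Rightarrow> real^'n"
  assumes c: "c > 0"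
  shows "(\<Sum>t<T. qf (Vm c u (Suc t)) (u t))
     \<le> real CARD('n) * ln (1 + (\<Sum>t<T. u t \<bullet> u t) / (real CARD('n) * c))"
proof -
  define n where "n = real CARD('n)"
  have n0: "n > 0" by (simp add: n_def)
  define r where "r t = qf (Vm c u t) (u t)" for t
  have step: "qf (Vm c u (Suc t)) (u t) = r t / (1 + r t) \<and> det (Vm c u (Suc t)) = det (Vm c u t) * (1 + r t)
      \<and> 0 \<le> r t" for t
  proof -
    obtain y where y: "Vm c u t *v y = u t" using pdm_solve[OF Vm_pdm[OF c]] by blast
    have "r t = u t \<bullet> y" using qf_eq[OF Vm_pdm[OF c] y] r_def by simp
    then show ?thesis using rank1[OF Vm_pdm[OF c] Vm_sym y] by (simp add: Vm_Suc)
  qed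
  have detT: "det (Vm c u T) = c ^ CARD('n) * (\<Prod>t<T. 1 + r t)"
  proof (induction T)
    case 0 then show ?case by (simp add: det_Vm0)
  next
    case (Suc T) then show ?case using step[of T] by simp
  qed
  have ppos: "(\<Prod>t<T. 1 + r t) > 0" using step by (intro prod_pos) (simp add: add_pos_nonneg)
  define D where "D i = (Vm c u T)$i$i" for i
  have Dpos: "D i > 0" for i using pdm_diag[OF Vm_pdm[OF c]] D_def by simp
  have had: "det (Vm c u T) \<le> (\<Prod>i\<in>UNIV. D i)"
    unfolding D_def by (rule hadamard[OF Vm_sym Vm_pdm[OF c]])
  have sumD: "(\<Sum>i\<in>UNIV. D i) = n * c + (\<Sum>t<T. u t \<bullet> u t)"
    by (simp add: D_def Vm_diag sum.distrib n_def inner_vec_def power2_eq_square sum.swap[of _ UNIV])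
  have "(\<Sum>t<T. qf (Vm c u (Suc t)) (u t)) \<le> (\<Sum>t<T. ln (1 + r t))"
    using step frac_le_ln by (intro sum_mono) simp
  also have "\<dots> = ln (\<Prod>t<T. 1 + r t)"
    using step by (subst ln_prod) (auto simp: add_nonneg_eq_0_iff)
  also have "\<dots> = ln (det (Vm c u T)) - n * ln c"
  proof -
    have "ln (c ^ CARD('n) * (\<Prod>t<T. 1 + r t)) = ln (c ^ CARD('n)) + ln (\<Prod>t<T. 1 + r t)"
      by (rule ln_mult_pos) (use ppos c in auto)
    then have "ln (det (Vm c u T)) = ln (c ^ CARD('n)) + ln (\<Prod>t<T. 1 + r t)"
      using detT by simp
    then show ?thesis using c by (simp add: ln_realpow n_def)
  qed
  also have "ln (det (Vm c u T)) \<le> ln (\<Prod>i\<in>UNIV. D i)"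
  proof -
    have "0 < det (Vm c u T)" using detT ppos c by simp
    then show ?thesis using had by simp
  qed
  also have "\<dots> = (\<Sum>i\<in>UNIV. ln (D i))"
    using Dpos by (subst ln_prod) (auto simp: less_imp_neq[symmetric])
  also have "\<dots> \<le> n * ln ((\<Sum>i\<in>UNIV. D i) / n)"
    using ln_sum_le[of "UNIV :: 'n set" D] Dpos by (simp add: n_def)
  also have "n * ln ((\<Sum>i\<in>UNIV. D i) / n) - n * ln c = n * ln (1 + (\<Sum>t<T. u t \<bullet> u t) / (n * c))"
  proof -
    have s0: "0 \<le> (\<Sum>t<T. u t \<bullet> u t)" by (simp add: sum_nonneg)
    have eqD: "(\<Sum>i\<in>UNIV. D i) / n = c * (1 + (\<Sum>t<T. u t \<bullet> u t) / (n * c))"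
      using n0 c by (simp add: sumD field_simps)
    then have "ln ((\<Sum>i\<in>UNIV. D i) / n) = ln c + ln (1 + (\<Sum>t<T. u t \<bullet> u t) / (n * c))"
    proof -
      have "0 < 1 + (\<Sum>t<T. u t \<bullet> u t) / (n * c)" using c n0 s0 by (simp add: add_pos_nonneg)
      then show ?thesis using c eqD by (simp add: ln_mult_pos)
    qed
    then show ?thesis by (simp add: algebra_simps)
  qed
  finally show ?thesis by (simp add: n_def)
qed



lemma sum3: "(\<Sum>(l,m,n)\<in>A\<times>B\<times>C. f l m n) = (\<Sum>l\<in>A. \<Sum>m\<in>B. \<Sum>n\<in>C. f l m n)"
  by (simp add: sum.cartesian_product)

lemma sgn_mul_self: "sgn a * a = \<bar>a::real\<bar>"
  by (simp add: abs_if sgn_if)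

lemma sumsq_le:
  assumes "finite A" "\<forall>i\<in>A. 0 \<le> f i"
  shows "(\<Sum>i\<in>A. (f i)^2) \<le> (\<Sum>i\<in>A. f i :: real)^2"
  using assms
proof (induction A rule: finite_induct)
  case empty then show ?case by simp
next
  case (insert a A)
  have s0: "0 \<le> (\<Sum>i\<in>A. f i)" using insert by (simp add: sum_nonneg)
  have fa: "0 \<le> f a" using insert by simp
  have "(\<Sum>i\<in>insert a A. (f i)^2) = (f a)^2 + (\<Sum>i\<in>A. (f i)^2)" using insert by simp
  also have "\<dots> \<le> (f a)^2 + (\<Sum>i\<in>A. f i)^2" using insert by simp
  also have "\<dots> \<le> (f a + (\<Sum>i\<in>A. f i))^2" using s0 fa by (simp add: power2_eq_square algebra_simps)
  also have "\<dots> = (\<Sum>i\<in>insert a A. f i)^2" using insert by simp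
  finally show ?case .
qed

lemma CS_sqrt:
  assumes "\<forall>i\<in>I. 0 \<le> a i" "\<forall>i\<in>I. 0 \<le> b i"
  shows "(\<Sum>i\<in>I. sqrt (a i) * sqrt (b i)) \<le> sqrt (\<Sum>i\<in>I. a i) * sqrt (\<Sum>i\<in>I. b i)"
proof -
  have "(\<Sum>i\<in>I. sqrt (a i) * sqrt (b i))^2 \<le> (\<Sum>i\<in>I. (sqrt (a i))^2) * (\<Sum>i\<in>I. (sqrt (b i))^2)"
    by (rule Cauchy_Schwarz_ineq_sum)
  also have "\<dots> = (\<Sum>i\<in>I. a i) * (\<Sum>i\<in>I. b i)" using assms by simp
  finally have "sqrt ((\<Sum>i\<in>I. sqrt (a i) * sqrt (b i))^2) \<le> sqrt ((\<Sum>i\<in>I. a i) * (\<Sum>i\<in>I. b i))"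
    using real_sqrt_le_mono by blast
  then show ?thesis by (simp add: real_sqrt_mult)
qed

lemma l1_sum: "l1norm (\<Sum>n\<in>S. f n) \<le> (\<Sum>n\<in>S. l1norm (f n))"
proof -
  have "l1norm (\<Sum>n\<in>S. f n) = (\<Sum>i\<in>UNIV. \<bar>\<Sum>n\<in>S. f n $ i\<bar>)"
    by (simp add: l1norm_def sum_component)
  also have "\<dots> \<le> (\<Sum>i\<in>UNIV. \<Sum>n\<in>S. \<bar>f n $ i\<bar>)"
    by (intro sum_mono sum_abs)
  also have "\<dots> = (\<Sum>n\<in>S. l1norm (f n))"
    by (simp add: l1norm_def sum.swap[of _ UNIV])
  finally show ?thesis .
qed

lemma l1_scale: "l1norm (c *\<^sub>R x) = \<bar>c\<bar> * l1norm x"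
  by (simp add: l1norm_def abs_mult sum_distrib_left)

lemma l1_nonneg: "0 \<le> l1norm x"
  by (simp add: l1norm_def sum_nonneg)

lemma inner_le_l1sq: "x \<bullet> x \<le> (l1norm x)^2"
proof -
  have "x \<bullet> x = (\<Sum>i\<in>UNIV. \<bar>x$i\<bar>^2)" by (simp add: inner_vec_def power2_eq_square)
  also have "\<dots> \<le> (\<Sum>i\<in>UNIV. \<bar>x$i\<bar>)^2" by (rule sumsq_le) auto
  finally show ?thesis by (simp add: l1norm_def)
qed

lemma abs_inner_l1: "\<bar>w \<bullet> x\<bar> \<le> l1norm w * l1norm (x :: real^'n)"
proof -
  have "\<bar>w \<bullet> x\<bar> \<le> (\<Sum>i\<in>UNIV. \<bar>w$i\<bar> * \<bar>x$i\<bar>)"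
    unfolding inner_vec_def by (rule order_trans[OF sum_abs]) (simp add: abs_mult)
  also have "\<dots> \<le> (\<Sum>i\<in>UNIV. \<bar>w$i\<bar> * l1norm x)"
  proof (intro sum_mono mult_left_mono)
    fix i show "\<bar>x$i\<bar> \<le> l1norm x" unfolding l1norm_def
      by (rule member_le_sum) auto
  qed simp
  also have "\<dots> = l1norm w * l1norm x" by (simp add: l1norm_def sum_distrib_right)
  finally show ?thesis .
qed

lemma flat:
  fixes K M :: nat
  assumes M: "M > 0"
  shows "(\<Sum>k\<in>{1..K}. \<Sum>m\<in>{1..M}. g ((k-1)*M + (m-1))) = (\<Sum>t<K*M. g t)"
proof -
  have "(\<Sum>k\<in>{1..K}. \<Sum>m\<in>{1..M}. g ((k-1)*M + (m-1))) = (\<Sum>(k,m)\<in>{1..K}\<times>{1..M}. g ((k-1)*M + (m-1)))"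
    by (rule sum.cartesian_product)
  also have "\<dots> = (\<Sum>t<K*M. g t)"
  proof -
    have A1: "((k-1)*M + (m-1)) div M + 1 = k \<and> ((k-1)*M + (m-1)) mod M + 1 = m \<and> (k-1)*M + (m-1) < K*M"
      if km: "k \<in> {1..K}" "m \<in> {1..M}" for k m
    proof -
      obtain k' m' where kk: "k = Suc k'" and mm': "m = Suc m'" using km by (cases k; cases m) auto
      have m'M: "m' < M" using km mm' by simp
      have "k' * M + m' < k' * M + M" using m'M by simp
      also have "\<dots> = k * M" using kk by simp
      also have "\<dots> \<le> K * M" using km by simp
      finally show ?thesis using m'M kk mm' by simp
    qed
    have A2: "t div M + 1 \<in> {1..K} \<and> t mod M + 1 \<in> {1..M}" if t: "t < K*M" for t
    proof -
      have "t div M < K" using t M by (simp add: div_less_iff_less_mult)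
      moreover have "t mod M < M" using M by simp
      ultimately show ?thesis by auto
    qed
    show ?thesis
      by (rule sum.reindex_bij_witness[where i="\<lambda>t. (t div M + 1, t mod M + 1)" and j="\<lambda>(k,m). (k-1)*M + (m-1)"])
         (use A1 A2 in auto)
  qed
  finally show ?thesis .
qed



lemma qf_nonneg: assumes "pdm A" shows "0 \<le> qf A z"
proof -
  obtain y where y: "A *v y = z" using pdm_solve[OF assms] by blast
  have "qf A z = y \<bullet> (A *v y)" using qf_eq[OF assms y] y by (simp add: inner_commute)
  then show ?thesis using pdm_nonneg[OF assms] by simp
qed

lemma idx_divmod:
  fixes k m M :: nat
  assumes "1 \<le> k" "1 \<le> m" "m \<le> M"
  shows "((k-1)*M + (m-1)) div M + 1 = k" "((k-1)*M + (m-1)) mod M + 1 = m"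
    "Suc ((k-1)*M + (m-1)) \<le> k * M"
proof -
  obtain k' m' where kk: "k = Suc k'" and mm': "m = Suc m'" using assms by (cases k; cases m) auto
  have m'M: "m' < M" using assms mm' by simp
  show "((k-1)*M + (m-1)) div M + 1 = k" "((k-1)*M + (m-1)) mod M + 1 = m"
    using m'M kk mm' by simp_all
  have "Suc (k' * M + m') \<le> k' * M + M" using m'M by simp
  then show "Suc ((k-1)*M + (m-1)) \<le> k * M" using kk mm' by simp
qed

lemma abs_z_inner:
  "\<bar>(\<Sum>n\<in>S. sgn (a n) *\<^sub>R x n) \<bullet> v\<bar> \<le> (\<Sum>n\<in>S. \<bar>v \<bullet> (x n :: real^'d)\<bar>)"
proof -
  have "\<bar>(\<Sum>n\<in>S. sgn (a n) *\<^sub>R x n) \<bullet> v\<bar> = \<bar>\<Sum>n\<in>S. sgn (a n) * (v \<bullet> x n)\<bar>"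
    by (subst inner_commute) (simp add: inner_sum_right)
  also have "\<dots> \<le> (\<Sum>n\<in>S. \<bar>sgn (a n) * (v \<bullet> x n)\<bar>)" by (rule sum_abs)
  also have "\<dots> \<le> (\<Sum>n\<in>S. \<bar>v \<bullet> x n\<bar>)"
    by (intro sum_mono) (simp add: abs_mult abs_sgn_eq mult_le_cancel_right1)
  finally show ?thesis .
qed

lemma l1_z:
  "l1norm (\<Sum>n\<in>S. sgn (a n) *\<^sub>R x n) \<le> (\<Sum>n\<in>S. l1norm (x n :: real^'d))"
proof -
  have "l1norm (\<Sum>n\<in>S. sgn (a n) *\<^sub>R x n) \<le> (\<Sum>n\<in>S. l1norm (sgn (a n) *\<^sub>R x n))" by (rule l1_sum)
  also have "\<dots> \<le> (\<Sum>n\<in>S. l1norm (x n))"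
    by (intro sum_mono) (simp add: l1_scale abs_sgn_eq l1_nonneg)
  finally show ?thesis .
qed

lemma sq_le_of_abs: "\<bar>a\<bar> \<le> (b::real) \<Longrightarrow> a^2 \<le> b^2"
  by (metis abs_ge_zero order_trans power2_abs power_mono)

theorem proposition5:
  fixes d K L M N :: nat
    and w x :: "nat \<Rightarrow> nat \<Rightarrow> nat \<Rightarrow> real ^ 'd"
    and \<beta> G\<^sub>w G\<^sub>x lam :: real
  assumes dim: "CARD('d) = d"
    and hbeta: "\<forall>k\<in>{1..K}. (\<Sum>j=1..k. (\<Sum>(l,m,n)\<in>{1..L}\<times>{1..M}\<times>{1..N}.
                   \<bar>w k l m \<bullet> x j l n\<bar>)\<^sup>2) \<le> \<beta>"
    and hw: "\<forall>k\<in>{1..K}. (\<Sum>l=1..L. \<Sum>m=1..M. l1norm (w k l m)) \<le> G\<^sub>w"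
    and hx: "\<forall>k\<in>{1..K}. (\<Sum>l=1..L. \<Sum>n=1..N. l1norm (x k l n)) \<le> G\<^sub>x"
    and Gw: "G\<^sub>w > 0" and Gx: "G\<^sub>x > 0"
    and hlam: "lam > 0"
  shows "(\<Sum>k=1..K. \<Sum>(l,m,n)\<in>{1..L}\<times>{1..M}\<times>{1..N}. \<bar>w k l m \<bullet> x k l n\<bar>)
         \<le> sqrt ((lam + \<beta>) * real d * real L * real M * real K *
                  ln (1 + real M * G\<^sub>w\<^sup>2 * G\<^sub>x\<^sup>2 * real K / (real d * real L * lam)))"
proof (cases "K = 0 \<or> L = 0 \<or> M = 0")
  case True
  then show ?thesis by auto
next
  case False
  then have K1: "1 \<le> K" and L1: "1 \<le> L" and M1: "1 \<le> M" by auto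
  have b0: "0 \<le> \<beta>"
  proof -
    have "(\<Sum>j=1..1. (\<Sum>(l,m,n)\<in>{1..L}\<times>{1..M}\<times>{1..N}. \<bar>w 1 l m \<bullet> x j l n\<bar>)\<^sup>2) \<le> \<beta>"
      using bspec[OF hbeta, of 1] K1 by simp
    then show ?thesis by (simp add: order_trans[OF zero_le_power2])
  qed
  have d0: "real d > 0" using dim by (metis of_nat_0_less_iff zero_less_card_finite)
  define c0 where "c0 = lam / G\<^sub>w^2"
  have c0: "c0 > 0" using hlam Gw by (simp add: c0_def)
  define z where "z k l m = (\<Sum>n\<in>{1..N}. sgn (w k l m \<bullet> x k l n) *\<^sub>R x k l n)" for k l m
  define u where "u l t = z (t div M + 1) l (t mod M + 1)" for l t
  define idx where "idx k m = (k-1)*M + (m-1)" for k m :: nat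
  define V where "V l t = (Vm c0 (u l) t :: real^'d^'d)" for l t
  define A where "A k l m = w k l m \<bullet> (V l (Suc (idx k m)) *v w k l m)" for k l m
  define B where "B k l m = qf (V l (Suc (idx k m))) (z k l m)" for k l m
  have Vsym: "transpose (V l t) = V l t" for l t by (simp add: V_def Vm_sym)
  have Vpd: "pdm (V l t)" for l t by (simp add: V_def Vm_pdm c0)
  have A0: "0 \<le> A k l m" for k l m by (simp add: A_def pdm_nonneg[OF Vpd])
  have B0: "0 \<le> B k l m" for k l m by (simp add: B_def qf_nonneg[OF Vpd])
  have u_idx: "u l (idx k m) = z k l m" if "1 \<le> k" "m \<in> {1..M}" for k l m
    using idx_divmod[of k m M] that by (simp add: u_def idx_def)
  have wz: "w k l m \<bullet> z k l m = (\<Sum>n\<in>{1..N}. \<bar>w k l m \<bullet> x k l n\<bar>)" for k l m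
    by (simp add: z_def inner_sum_right sgn_mul_self)
  have LHS: "(\<Sum>k=1..K. \<Sum>(l,m,n)\<in>{1..L}\<times>{1..M}\<times>{1..N}. \<bar>w k l m \<bullet> x k l n\<bar>)
      = (\<Sum>k=1..K. \<Sum>m\<in>{1..M}. \<Sum>l\<in>{1..L}. w k l m \<bullet> z k l m)"
  proof (rule sum.cong[OF refl])
    fix k
    have "(\<Sum>(l,m,n)\<in>{1..L}\<times>{1..M}\<times>{1..N}. \<bar>w k l m \<bullet> x k l n\<bar>)
        = (\<Sum>l\<in>{1..L}. \<Sum>m\<in>{1..M}. w k l m \<bullet> z k l m)"
      by (simp add: sum3 wz)
    also have "\<dots> = (\<Sum>m\<in>{1..M}. \<Sum>l\<in>{1..L}. w k l m \<bullet> z k l m)" by (rule sum.swap)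
    finally show "(\<Sum>(l,m,n)\<in>{1..L}\<times>{1..M}\<times>{1..N}. \<bar>w k l m \<bullet> x k l n\<bar>)
        = (\<Sum>m\<in>{1..M}. \<Sum>l\<in>{1..L}. w k l m \<bullet> z k l m)" .
  qed
  have cs: "w k l m \<bullet> z k l m \<le> sqrt (A k l m) * sqrt (B k l m)" for k l m
  proof -
    have "(w k l m \<bullet> z k l m)^2 \<le> A k l m * B k l m"
      unfolding A_def B_def by (rule CS_V[OF Vsym Vpd])
    then have "sqrt ((w k l m \<bullet> z k l m)^2) \<le> sqrt (A k l m * B k l m)"
      using real_sqrt_le_mono by blast
    then show ?thesis by (simp add: real_sqrt_mult)
  qed
  have Sk: "(\<Sum>m\<in>{1..M}. \<Sum>l\<in>{1..L}. w k l m \<bullet> z k l m)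
      \<le> sqrt (\<Sum>m\<in>{1..M}. \<Sum>l\<in>{1..L}. A k l m) * sqrt (\<Sum>m\<in>{1..M}. \<Sum>l\<in>{1..L}. B k l m)" for k
  proof -
    have "(\<Sum>m\<in>{1..M}. \<Sum>l\<in>{1..L}. w k l m \<bullet> z k l m)
        \<le> (\<Sum>m\<in>{1..M}. \<Sum>l\<in>{1..L}. sqrt (A k l m) * sqrt (B k l m))"
      by (intro sum_mono cs)
    also have "\<dots> \<le> (\<Sum>m\<in>{1..M}. sqrt (\<Sum>l\<in>{1..L}. A k l m) * sqrt (\<Sum>l\<in>{1..L}. B k l m))"
      by (intro sum_mono CS_sqrt) (simp_all add: A0 B0)
    also have "\<dots> \<le> sqrt (\<Sum>m\<in>{1..M}. \<Sum>l\<in>{1..L}. A k l m) * sqrt (\<Sum>m\<in>{1..M}. \<Sum>l\<in>{1..L}. B k l m)"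
      by (intro CS_sqrt) (simp_all add: A0 B0 sum_nonneg)
    finally show ?thesis .
  qed
  define \<Lambda> where "\<Lambda> = lam + real M * \<beta>"
  have Abound: "(\<Sum>m\<in>{1..M}. \<Sum>l\<in>{1..L}. A k l m) \<le> \<Lambda>" if k: "k \<in> {1..K}" for k
  proof -
    define e where "e m j = (\<Sum>l\<in>{1..L}. \<Sum>n\<in>{1..N}. \<bar>w k l m \<bullet> x j l n\<bar>)" for m j
    have e0: "0 \<le> e m j" for m j by (simp add: e_def sum_nonneg)
    have Al: "A k l m \<le> c0 * (w k l m \<bullet> w k l m) + real M * (\<Sum>j=1..k. (\<Sum>n\<in>{1..N}. \<bar>w k l m \<bullet> x j l n\<bar>)^2)"
      if m: "m \<in> {1..M}" for l m
    proof -
      define S1 where "S1 = (\<Sum>s<Suc (idx k m). (u l s \<bullet> w k l m)^2)"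
      define S2 where "S2 = (\<Sum>s<k*M. (u l s \<bullet> w k l m)^2)"
      define S3 where "S3 = (\<Sum>j=1..k. \<Sum>m'\<in>{1..M}. (z j l m' \<bullet> w k l m)^2)"
      define S4 where "S4 = (\<Sum>j=1..k. \<Sum>m'\<in>{1..M}. (\<Sum>n\<in>{1..N}. \<bar>w k l m \<bullet> x j l n\<bar>)^2)"
      have a1: "A k l m = c0 * (w k l m \<bullet> w k l m) + S1"
        by (simp add: A_def V_def Vm_quad S1_def)
      have a2: "S1 \<le> S2"
        unfolding S1_def S2_def using idx_divmod(3)[of k m M] k m
        by (intro sum_mono2) (auto simp: idx_def)
      have a3: "S3 = S2"
      proof -
        have "S3 = (\<Sum>j=1..k. \<Sum>m'\<in>{1..M}. (\<lambda>s. (u l s \<bullet> w k l m)^2) ((j-1)*M + (m'-1)))"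
          unfolding S3_def
        proof (intro sum.cong refl)
          fix j m' assume jm: "j \<in> {1..k}" "m' \<in> {1..M}"
          have e: "u l ((j-1)*M + (m'-1)) = z j l m'" using u_idx[of j m' l] jm by (simp add: idx_def)
          show "(z j l m' \<bullet> w k l m)^2 = (\<lambda>s. (u l s \<bullet> w k l m)^2) ((j-1)*M + (m'-1))" by (simp only: e)
        qed
        also have "\<dots> = S2" unfolding S2_def using M1 by (intro flat) simp
        finally show ?thesis .
      qed
      have a4: "S3 \<le> S4"
        unfolding S3_def S4_def
        by (intro sum_mono sq_le_of_abs) (simp add: z_def abs_z_inner)
      have a5: "S4 = real M * (\<Sum>j=1..k. (\<Sum>n\<in>{1..N}. \<bar>w k l m \<bullet> x j l n\<bar>)^2)"
        by (simp add: S4_def sum_distrib_left)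
      show ?thesis using a1 a2 a3 a4 a5 by linarith
    qed
    have Alsum: "(\<Sum>l\<in>{1..L}. A k l m) \<le> c0 * (\<Sum>l\<in>{1..L}. w k l m \<bullet> w k l m) + real M * (\<Sum>j=1..k. (e m j)^2)"
      if m: "m \<in> {1..M}" for m
    proof -
      have "(\<Sum>l\<in>{1..L}. A k l m) \<le> (\<Sum>l\<in>{1..L}. c0 * (w k l m \<bullet> w k l m) + real M * (\<Sum>j=1..k. (\<Sum>n\<in>{1..N}. \<bar>w k l m \<bullet> x j l n\<bar>)^2))"
        by (intro sum_mono Al m)
      also have "\<dots> = c0 * (\<Sum>l\<in>{1..L}. w k l m \<bullet> w k l m) + real M * (\<Sum>l\<in>{1..L}. \<Sum>j=1..k. (\<Sum>n\<in>{1..N}. \<bar>w k l m \<bullet> x j l n\<bar>)^2)"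
        by (simp add: sum.distrib sum_distrib_left)
      also have "(\<Sum>l\<in>{1..L}. \<Sum>j=1..k. (\<Sum>n\<in>{1..N}. \<bar>w k l m \<bullet> x j l n\<bar>)^2) = (\<Sum>j=1..k. \<Sum>l\<in>{1..L}. (\<Sum>n\<in>{1..N}. \<bar>w k l m \<bullet> x j l n\<bar>)^2)"
        by (rule sum.swap)
      also have "c0 * (\<Sum>l\<in>{1..L}. w k l m \<bullet> w k l m) + real M * (\<Sum>j=1..k. \<Sum>l\<in>{1..L}. (\<Sum>n\<in>{1..N}. \<bar>w k l m \<bullet> x j l n\<bar>)^2) \<le> c0 * (\<Sum>l\<in>{1..L}. w k l m \<bullet> w k l m) + real M * (\<Sum>j=1..k. (e m j)^2)"
        unfolding e_def
        by (intro add_left_mono mult_left_mono sum_mono sumsq_le) (simp_all add: sum_nonneg)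
      finally show ?thesis .
    qed
    have ww: "(\<Sum>m\<in>{1..M}. \<Sum>l\<in>{1..L}. w k l m \<bullet> w k l m) \<le> G\<^sub>w^2"
    proof -
      have "(\<Sum>m\<in>{1..M}. \<Sum>l\<in>{1..L}. w k l m \<bullet> w k l m) \<le> (\<Sum>m\<in>{1..M}. \<Sum>l\<in>{1..L}. (l1norm (w k l m))^2)"
        by (intro sum_mono inner_le_l1sq)
      also have "\<dots> \<le> (\<Sum>m\<in>{1..M}. (\<Sum>l\<in>{1..L}. l1norm (w k l m))^2)"
        by (intro sum_mono sumsq_le) (simp_all add: l1_nonneg)
      also have "\<dots> \<le> (\<Sum>m\<in>{1..M}. \<Sum>l\<in>{1..L}. l1norm (w k l m))^2"
        by (rule sumsq_le) (simp_all add: sum_nonneg l1_nonneg)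
      also have "(\<Sum>m\<in>{1..M}. \<Sum>l\<in>{1..L}. l1norm (w k l m)) = (\<Sum>l\<in>{1..L}. \<Sum>m\<in>{1..M}. l1norm (w k l m))"
        by (rule sum.swap)
      also have "(\<dots>)^2 \<le> G\<^sub>w^2"
        using bspec[OF hw k] by (intro power_mono) (simp_all add: sum_nonneg l1_nonneg)
      finally show ?thesis .
    qed
    have esum: "(\<Sum>m\<in>{1..M}. e m j) = (\<Sum>(l,m,n)\<in>{1..L}\<times>{1..M}\<times>{1..N}. \<bar>w k l m \<bullet> x j l n\<bar>)" for j
      unfolding e_def sum3 by (rule sum.swap)
    have "(\<Sum>m\<in>{1..M}. \<Sum>l\<in>{1..L}. A k l m)
        \<le> (\<Sum>m\<in>{1..M}. c0 * (\<Sum>l\<in>{1..L}. w k l m \<bullet> w k l m) + real M * (\<Sum>j=1..k. (e m j)^2))"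
      by (intro sum_mono Alsum)
    also have "\<dots> = c0 * (\<Sum>m\<in>{1..M}. \<Sum>l\<in>{1..L}. w k l m \<bullet> w k l m) + real M * (\<Sum>m\<in>{1..M}. \<Sum>j=1..k. (e m j)^2)"
      by (simp add: sum.distrib sum_distrib_left)
    also have "(\<Sum>m\<in>{1..M}. \<Sum>j=1..k. (e m j)^2) = (\<Sum>j=1..k. \<Sum>m\<in>{1..M}. (e m j)^2)"
      by (rule sum.swap)
    also have "c0 * (\<Sum>m\<in>{1..M}. \<Sum>l\<in>{1..L}. w k l m \<bullet> w k l m) + real M * (\<Sum>j=1..k. \<Sum>m\<in>{1..M}. (e m j)^2) \<le> c0 * G\<^sub>w^2 + real M * (\<Sum>j=1..k. (\<Sum>m\<in>{1..M}. e m j)^2)"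
      using ww c0 by (intro add_mono mult_left_mono sum_mono sumsq_le) (simp_all add: e0)
    also have "c0 * G\<^sub>w^2 + real M * (\<Sum>j=1..k. (\<Sum>m\<in>{1..M}. e m j)^2) \<le> lam + real M * \<beta>"
    proof -
      have h: "(\<Sum>j=1..k. (\<Sum>m\<in>{1..M}. e m j)^2) \<le> \<beta>"
        using bspec[OF hbeta k] by (simp only: esum)
      have hc: "c0 * G\<^sub>w^2 = lam" using Gw by (simp add: c0_def)
      show ?thesis using mult_left_mono[OF h, of "real M"] hc by simp
    qed
    finally show ?thesis by (simp add: \<Lambda>_def)
  qed
  define Bk where "Bk k = (\<Sum>m\<in>{1..M}. \<Sum>l\<in>{1..L}. B k l m)" for k
  have Bk0: "0 \<le> Bk k" for k by (simp add: Bk_def B0 sum_nonneg)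
  have Lam0: "0 \<le> \<Lambda>" using hlam b0 by (simp add: \<Lambda>_def)
  have step5: "(\<Sum>k=1..K. \<Sum>m\<in>{1..M}. \<Sum>l\<in>{1..L}. w k l m \<bullet> z k l m)
       \<le> sqrt \<Lambda> * (sqrt (real K) * sqrt (\<Sum>k=1..K. Bk k))"
  proof -
    have "(\<Sum>k=1..K. \<Sum>m\<in>{1..M}. \<Sum>l\<in>{1..L}. w k l m \<bullet> z k l m) \<le> (\<Sum>k=1..K. sqrt \<Lambda> * sqrt (Bk k))"
    proof (rule sum_mono)
      fix k assume k: "k \<in> {1..K}"
      have "sqrt (\<Sum>m\<in>{1..M}. \<Sum>l\<in>{1..L}. A k l m) \<le> sqrt \<Lambda>" using Abound[OF k] by simp
      then have "sqrt (\<Sum>m\<in>{1..M}. \<Sum>l\<in>{1..L}. A k l m) * sqrt (Bk k) \<le> sqrt \<Lambda> * sqrt (Bk k)"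
        by (rule mult_right_mono) (simp add: Bk0)
      then show "(\<Sum>m\<in>{1..M}. \<Sum>l\<in>{1..L}. w k l m \<bullet> z k l m) \<le> sqrt \<Lambda> * sqrt (Bk k)"
        using Sk[of k] unfolding Bk_def by linarith
    qed
    also have "\<dots> = sqrt \<Lambda> * (\<Sum>k=1..K. sqrt 1 * sqrt (Bk k))" by (simp add: sum_distrib_left)
    also have "\<dots> \<le> sqrt \<Lambda> * (sqrt (\<Sum>k=1..K. 1) * sqrt (\<Sum>k=1..K. Bk k))"
      by (intro mult_left_mono CS_sqrt) (simp_all add: Bk0 Lam0)
    also have "\<dots> = sqrt \<Lambda> * (sqrt (real K) * sqrt (\<Sum>k=1..K. Bk k))" by simp
    finally show ?thesis .
  qed
  define T where "T l = (\<Sum>t<K*M. u l t \<bullet> u l t)" for l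
  have T0: "0 \<le> T l" for l by (simp add: T_def sum_nonneg)
  have Bsum: "(\<Sum>k=1..K. Bk k) = (\<Sum>l\<in>{1..L}. \<Sum>t<K*M. qf (V l (Suc t)) (u l t))"
  proof -
    have "(\<Sum>k=1..K. Bk k) = (\<Sum>l\<in>{1..L}. \<Sum>k=1..K. \<Sum>m\<in>{1..M}. B k l m)"
    proof -
      have "(\<Sum>k=1..K. Bk k) = (\<Sum>k=1..K. \<Sum>l\<in>{1..L}. \<Sum>m\<in>{1..M}. B k l m)"
        unfolding Bk_def by (rule sum.cong[OF refl], rule sum.swap)
      also have "\<dots> = (\<Sum>l\<in>{1..L}. \<Sum>k=1..K. \<Sum>m\<in>{1..M}. B k l m)" by (rule sum.swap)
      finally show ?thesis .
    qed
    also have "\<dots> = (\<Sum>l\<in>{1..L}. \<Sum>t<K*M. qf (V l (Suc t)) (u l t))"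
    proof (rule sum.cong[OF refl])
      fix l
      have "(\<Sum>k=1..K. \<Sum>m\<in>{1..M}. B k l m)
          = (\<Sum>k=1..K. \<Sum>m\<in>{1..M}. qf (V l (Suc ((k-1)*M + (m-1)))) (u l ((k-1)*M + (m-1))))"
      proof (intro sum.cong refl)
        fix k m assume km: "k \<in> {1..K}" "m \<in> {1..M}"
        have e: "u l ((k-1)*M + (m-1)) = z k l m" using u_idx[of k m l] km by (simp add: idx_def)
        show "B k l m = qf (V l (Suc ((k-1)*M + (m-1)))) (u l ((k-1)*M + (m-1)))"
          by (simp only: B_def idx_def e)
      qed
      also have "\<dots> = (\<Sum>t<K*M. qf (V l (Suc t)) (u l t))"
        using M1 by (intro flat) simp
      finally show "(\<Sum>k=1..K. \<Sum>m\<in>{1..M}. B k l m) = (\<Sum>t<K*M. qf (V l (Suc t)) (u l t))" .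
    qed
    finally show ?thesis .
  qed
  have pot: "(\<Sum>t<K*M. qf (V l (Suc t)) (u l t)) \<le> real d * ln (1 + T l / (real d * c0))" for l
    using potential[OF c0, of "u l" "K*M"] dim by (simp add: V_def T_def)
  have jensen: "(\<Sum>l\<in>{1..L}. real d * ln (1 + T l / (real d * c0)))
      \<le> real d * real L * ln (1 + (\<Sum>l\<in>{1..L}. T l) / (real d * real L * c0))"
  proof -
    have "(\<Sum>l\<in>{1..L}. ln (1 + T l / (real d * c0)))
        \<le> real (card {1..L}) * ln ((\<Sum>l\<in>{1..L}. 1 + T l / (real d * c0)) / real (card {1..L}))"
      using L1 d0 c0 T0 by (intro ln_sum_le) (auto intro!: add_pos_nonneg)
    also have "(\<Sum>l\<in>{1..L}. 1 + T l / (real d * c0)) / real (card {1..L})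
        = 1 + (\<Sum>l\<in>{1..L}. T l) / (real d * real L * c0)"
    proof -
      have "(\<Sum>l\<in>{1..L}. 1 + T l / (real d * c0)) = real L + (\<Sum>l\<in>{1..L}. T l) / (real d * c0)"
        by (simp add: sum.distrib sum_divide_distrib[symmetric])
      moreover have "(real L + S / (real d * c0)) / real L = 1 + S / (real d * real L * c0)" for S
        using L1 d0 c0 by (simp add: add_divide_distrib)
      ultimately show ?thesis by simp
    qed
    finally show ?thesis using d0 by (simp add: sum_distrib_left[symmetric] mult_left_mono mult.assoc)
  qed
  have Tsum: "(\<Sum>l\<in>{1..L}. T l) \<le> real K * real M * G\<^sub>x^2"
  proof -
    have Tl: "T l = (\<Sum>k=1..K. \<Sum>m\<in>{1..M}. z k l m \<bullet> z k l m)" for l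
    proof -
      have "(\<Sum>k=1..K. \<Sum>m\<in>{1..M}. z k l m \<bullet> z k l m)
          = (\<Sum>k=1..K. \<Sum>m\<in>{1..M}. (\<lambda>t. u l t \<bullet> u l t) ((k-1)*M + (m-1)))"
      proof (intro sum.cong refl)
        fix k m assume km: "k \<in> {1..K}" "m \<in> {1..M}"
        have e: "u l ((k-1)*M + (m-1)) = z k l m" using u_idx[of k m l] km by (simp add: idx_def)
        show "z k l m \<bullet> z k l m = (\<lambda>t. u l t \<bullet> u l t) ((k-1)*M + (m-1))" by (simp only: e)
      qed
      also have "\<dots> = (\<Sum>t<K*M. u l t \<bullet> u l t)" using M1 by (intro flat) simp
      finally show ?thesis by (simp add: T_def)
    qed
    have zl: "(\<Sum>l\<in>{1..L}. z k l m \<bullet> z k l m) \<le> G\<^sub>x^2" if k: "k \<in> {1..K}" for k m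
    proof -
      have "(\<Sum>l\<in>{1..L}. z k l m \<bullet> z k l m) \<le> (\<Sum>l\<in>{1..L}. (\<Sum>n\<in>{1..N}. l1norm (x k l n))^2)"
      proof (rule sum_mono)
        fix l
        have "z k l m \<bullet> z k l m \<le> (l1norm (z k l m))^2" by (rule inner_le_l1sq)
        also have "\<dots> \<le> (\<Sum>n\<in>{1..N}. l1norm (x k l n))^2"
          unfolding z_def by (intro power_mono l1_z l1_nonneg)
        finally show "z k l m \<bullet> z k l m \<le> (\<Sum>n\<in>{1..N}. l1norm (x k l n))^2" .
      qed
      also have "\<dots> \<le> (\<Sum>l\<in>{1..L}. \<Sum>n\<in>{1..N}. l1norm (x k l n))^2"
        by (rule sumsq_le) (simp_all add: sum_nonneg l1_nonneg)
      also have "\<dots> \<le> G\<^sub>x^2"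
        using bspec[OF hx k] by (intro power_mono) (simp_all add: sum_nonneg l1_nonneg)
      finally show ?thesis .
    qed
    have "(\<Sum>l\<in>{1..L}. T l) = (\<Sum>l\<in>{1..L}. \<Sum>k=1..K. \<Sum>m\<in>{1..M}. z k l m \<bullet> z k l m)"
      by (simp add: Tl)
    also have "\<dots> = (\<Sum>k=1..K. \<Sum>l\<in>{1..L}. \<Sum>m\<in>{1..M}. z k l m \<bullet> z k l m)" by (rule sum.swap)
    also have "\<dots> = (\<Sum>k=1..K. \<Sum>m\<in>{1..M}. \<Sum>l\<in>{1..L}. z k l m \<bullet> z k l m)"
      by (rule sum.cong[OF refl], rule sum.swap)
    also have "\<dots> \<le> (\<Sum>k=1..K. \<Sum>m\<in>{1..M}. G\<^sub>x^2)"
      by (intro sum_mono zl) auto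
    also have "\<dots> = real K * real M * G\<^sub>x^2" by simp
    finally show ?thesis .
  qed
  define X where "X = 1 + real M * G\<^sub>w\<^sup>2 * G\<^sub>x\<^sup>2 * real K / (real d * real L * lam)"
  have X1: "1 \<le> X" using d0 L1 hlam by (simp add: X_def)
  have lnX: "ln (1 + (\<Sum>l\<in>{1..L}. T l) / (real d * real L * c0)) \<le> ln X"
  proof -
    have pos: "0 < 1 + (\<Sum>l\<in>{1..L}. T l) / (real d * real L * c0)"
      using T0 d0 L1 c0 by (intro add_pos_nonneg) (simp_all add: sum_nonneg)
    have "(\<Sum>l\<in>{1..L}. T l) / (real d * real L * c0) \<le> real K * real M * G\<^sub>x^2 / (real d * real L * c0)"
      using Tsum d0 L1 c0 by (intro divide_right_mono) simp_all
    also have "\<dots> = real M * G\<^sub>w\<^sup>2 * G\<^sub>x\<^sup>2 * real K / (real d * real L * lam)"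
      using Gw hlam d0 L1 by (simp add: c0_def field_simps)
    finally show ?thesis using pos by (simp add: X_def)
  qed
  have BK: "(\<Sum>k=1..K. Bk k) \<le> real d * real L * ln X"
  proof -
    have "(\<Sum>k=1..K. Bk k) \<le> (\<Sum>l\<in>{1..L}. real d * ln (1 + T l / (real d * c0)))"
      unfolding Bsum by (intro sum_mono pot)
    also have "\<dots> \<le> real d * real L * ln (1 + (\<Sum>l\<in>{1..L}. T l) / (real d * real L * c0))"
      by (rule jensen)
    also have "\<dots> \<le> real d * real L * ln X"
      using lnX d0 by (intro mult_left_mono) simp_all
    finally show ?thesis .
  qed
  have lnX0: "0 \<le> ln X" using X1 by simp
  have "(\<Sum>k=1..K. \<Sum>(l,m,n)\<in>{1..L}\<times>{1..M}\<times>{1..N}. \<bar>w k l m \<bullet> x k l n\<bar>)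
      \<le> sqrt \<Lambda> * (sqrt (real K) * sqrt (real d * real L * ln X))"
  proof -
    have "sqrt \<Lambda> * (sqrt (real K) * sqrt (\<Sum>k=1..K. Bk k)) \<le> sqrt \<Lambda> * (sqrt (real K) * sqrt (real d * real L * ln X))"
      using BK by (intro mult_left_mono real_sqrt_le_mono) (simp_all add: Lam0)
    then show ?thesis unfolding LHS using step5 by linarith
  qed
  also have "\<dots> = sqrt (\<Lambda> * real K * (real d * real L * ln X))"
    by (simp add: real_sqrt_mult)
  also have "\<dots> \<le> sqrt ((lam + \<beta>) * real d * real L * real M * real K * ln X)"
  proof (rule real_sqrt_le_mono)
    have "\<Lambda> \<le> real M * (lam + \<beta>)" using M1 hlam by (simp add: \<Lambda>_def algebra_simps)
    then have "\<Lambda> * (real K * (real d * real L * ln X)) \<le> real M * (lam + \<beta>) * (real K * (real d * real L * ln X))"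
      using lnX0 by (intro mult_right_mono) simp_all
    then show "\<Lambda> * real K * (real d * real L * ln X) \<le> (lam + \<beta>) * real d * real L * real M * real K * ln X"
      by (simp add: algebra_simps)
  qed
  finally show ?thesis by (simp add: X_def)
qed


end
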